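(* Let $\mathcal M$ be the class of multilayer networks with $d$ aspects having a common vertex set $L_0$ and common elementary-layer sets $L_1,\dots,L_d$, and let $p\subseteq\{0,\dots,d\}$ be nonempty. Then for all $M,M'\in\mathcal M$, $$\mathrm{Iso}_p(M,M')=\{\boldsymbol\zeta\in P_p : g_p^M(\boldsymbol\zeta)\in\mathrm{Iso}(f_p(M),f_p(M'))\}.$$
   Context: A multilayer network with $d$ aspects is $M=(V_M,E_M,V,\mathbf L)$ with $\mathbf L=(L_1,\dots,L_d)$, $V_M\subseteq V\times L_1\times\dots\times L_d$, $E_M\subseteq V_M\times V_M$; write $L_0=V$ and $\mathbf v=(v_0,\dots,v_d)$. It is assumed that the sets $L_0,\dots,L_d$ are pairwise disjoint and that no tuple in $L_0\times\dots\times L_d$ belongs to any $L_a$. For nonempty $p\subseteq\{0,\dots,d\}$, $P_p=D_0\times\dots\times D_d$ with $D_a=S_{L_a}$ (symmetric group) if $a\in p$ and $D_a=\{1_{L_a}\}$ otherwise. For $\boldsymbol\zeta\in P_p$, $\mathbf v^{\boldsymbol\zeta}=(\zeta_0(v_0),\dots,\zeta_d(v_d))$ and $M^{\boldsymbol\zeta}=(\{\mathbf v^{\boldsymbol\zeta}:\mathbf v\in V_M\},\{(\mathbf v^{\boldsymbol\zeta},\mathbf u^{\boldsymbol\zeta}):(\mathbf v,\mathbf u)\in E_M\},V,\mathbf L)$; $\mathrm{Iso}_p(M,M')=\{\boldsymbol\zeta\in P_p:M^{\boldsymbol\zeta}=M'\}$. A vertex-colored graph is $G=(V_c,E_c,\pi,C)$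 with $E_c\subseteq V_c\times V_c$ and $\pi:V_c\to C$. For a bijection $\gamma:V_c\to V_c'$, $G^\gamma=(\gamma(V_c),\{(\gamma(v),\gamma(u)):(v,u)\in E_c\},\pi\circ\gamma^{-1},C)$, and $\mathrm{Iso}(G,G')$ is the set of bijections $\gamma$ from the vertex set of $G$ to that of $G'$ with $G^\gamma=G'$. Let $\overline p=\{0,\dots,d\}\setminus p=\{\overline p_1<\dots<\overline p_m\}$. Define $f_p(M)=(V_G,E_G,\pi,C)$ by: $V_G=V_M\cup\bigcup_{a\in p}L_a$; $E_G=E_M\cup\{(v_a,\mathbf v):\mathbf v\in V_M,\ a\in p\}$; $C=p\cup(L_{\overline p_1}\times\dots\times L_{\overline p_m})$; $\pi(x)=a$ if $x\in L_a$ with $a\in p$, and $\pi(\mathbf v)=(v_{\overline p_1},\dots,v_{\overline p_m})$ if $\mathbf v\in V_M$. For $\boldsymbol\zeta\in P_p$, let $g_p^M(\boldsymbol\zeta)$ be the bijection from $V_G$ (the vertex set of $f_p(M)$) to the vertex set of $f_p(M^{\boldsymbol\zeta})$ given by $\mathbf v\mapsto\mathbf v^{\boldsymbol\zeta}$ for $\mathbf v\in V_M$ and $x\mapsto\zeta_a(x)$ for $x\in L_a$, $a\in p$. *)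

theory Defs
  imports "HOL-Combinatorics.Permutations" "HOL-Library.FuncSet"
begin

(* All elementary layers (including the vertex set L_0) live in one type 'a,
   given by L :: nat => 'a set (L 0 = V, L 1, ..., L d).
   A tuple of permutations zeta = (zeta_0,...,zeta_d) is a function nat => ('a => 'a);
   a permutation of L_a is a function permuting L_a (identity outside L_a);
   indices > d are normalised to id. *)

type_synonym 'a mlnet = "'a list set \<times> ('a list \<times> 'a list) set"

definition tuples :: "nat \<Rightarrow> (nat \<Rightarrow> 'a set) \<Rightarrow> 'a list set" where
  "tuples d L = {v. length v = Suc d \<and> (\<forall>a\<le>d. v ! a \<in> L a)}"

definition is_mlnet :: "nat \<Rightarrow> (nat \<Rightarrow> 'a set) \<Rightarrow> 'a mlnet \<Rightarrow> bool" where
  "is_mlnet d L M \<longleftrightarrow> fst M \<subseteq> tuples d L \<and> snd M \<subseteq> fst M \<times> fst M"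

definition Pp :: "nat \<Rightarrow> (nat \<Rightarrow> 'a set) \<Rightarrow> nat set \<Rightarrow> (nat \<Rightarrow> 'a \<Rightarrow> 'a) set" where
  "Pp d L p = {\<zeta>. (\<forall>a\<le>d. if a \<in> p then \<zeta> a permutes L a else \<zeta> a = id)
                 \<and> (\<forall>a>d. \<zeta> a = id)}"

definition tup_act :: "(nat \<Rightarrow> 'a \<Rightarrow> 'a) \<Rightarrow> 'a list \<Rightarrow> 'a list" where
  "tup_act \<zeta> v = map (\<lambda>a. \<zeta> a (v ! a)) [0..<length v]"

definition net_act :: "(nat \<Rightarrow> 'a \<Rightarrow> 'a) \<Rightarrow> 'a mlnet \<Rightarrow> 'a mlnet" where
  "net_act \<zeta> M = (tup_act \<zeta> ` fst M,
                   (\<lambda>(v, u). (tup_act \<zeta> v, tup_act \<zeta> u)) ` snd M)"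

definition Iso_p :: "nat \<Rightarrow> (nat \<Rightarrow> 'a set) \<Rightarrow> nat set \<Rightarrow> 'a mlnet \<Rightarrow> 'a mlnet
                      \<Rightarrow> (nat \<Rightarrow> 'a \<Rightarrow> 'a) set" where
  "Iso_p d L p M M' = {\<zeta> \<in> Pp d L p. net_act \<zeta> M = M'}"

(* Vertex-colored graphs (V_c, E_c, pi, C); the colouring pi is kept extensional
   (undefined outside V_c) so that equality of graphs is meaningful. *)
type_synonym ('v, 'c) cgraph = "'v set \<times> ('v \<times> 'v) set \<times> ('v \<Rightarrow> 'c) \<times> 'c set"

definition cg_act :: "('v \<Rightarrow> 'w) \<Rightarrow> ('v, 'c) cgraph \<Rightarrow> ('w, 'c) cgraph" where
  "cg_act \<gamma> G = (case G of (V, E, \<pi>, C) \<Rightarrow>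
     (\<gamma> ` V, (\<lambda>(v, u). (\<gamma> v, \<gamma> u)) ` E, restrict (\<pi> \<circ> inv_into V \<gamma>) (\<gamma> ` V), C))"

definition cg_iso :: "('v, 'c) cgraph \<Rightarrow> ('w, 'c) cgraph \<Rightarrow> ('v \<Rightarrow> 'w) set" where
  "cg_iso G G' = {\<gamma>. bij_betw \<gamma> (fst G) (fst G') \<and> cg_act \<gamma> G = G'}"

definition pbar :: "nat \<Rightarrow> nat set \<Rightarrow> nat list" where
  "pbar d p = filter (\<lambda>a. a \<notin> p) [0..<Suc d]"

(* V_G = V_M \<union> \<Union>_{a\<in>p} L_a, realised as a disjoint union via the sum type
   (the paper assumes tuples are not elements of any L_a). Colours:
   C = p \<union> (L_{pbar_1} x ... x L_{pbar_m}), again as a sum type. *)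
definition fp_V :: "nat \<Rightarrow> (nat \<Rightarrow> 'a set) \<Rightarrow> nat set \<Rightarrow> 'a mlnet \<Rightarrow> ('a list + 'a) set" where
  "fp_V d L p M = Inl ` fst M \<union> Inr ` (\<Union>a\<in>p. L a)"

definition fp :: "nat \<Rightarrow> (nat \<Rightarrow> 'a set) \<Rightarrow> nat set \<Rightarrow> 'a mlnet
                    \<Rightarrow> ('a list + 'a, nat + 'a list) cgraph" where
  "fp d L p M =
     (fp_V d L p M,
      {(Inl v, Inl u) | v u. (v, u) \<in> snd M} \<union> {(Inr (v ! a), Inl v) | v a. v \<in> fst M \<and> a \<in> p},
      restrict (\<lambda>x. case x of
                  Inl v \<Rightarrow> Inr (map (\<lambda>a. v ! a) (pbar d p))
                | Inr y \<Rightarrow> Inl (THE a. a \<in> p \<and> y \<in> L a)) (fp_V d L p M),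
      Inl ` p \<union> Inr ` {w. length w = length (pbar d p) \<and>
                         (\<forall>i<length (pbar d p). w ! i \<in> L (pbar d p ! i))})"

definition gp :: "nat \<Rightarrow> (nat \<Rightarrow> 'a set) \<Rightarrow> nat set \<Rightarrow> (nat \<Rightarrow> 'a \<Rightarrow> 'a)
                    \<Rightarrow> ('a list + 'a) \<Rightarrow> ('a list + 'a)" where
  "gp d L p \<zeta> x = (case x of
       Inl v \<Rightarrow> Inl (tup_act \<zeta> v)
     | Inr y \<Rightarrow> Inr (\<zeta> (THE a. a \<in> p \<and> y \<in> L a) y))"

end

theory Submission
  imports Defs
begin

lemma tup_act_nth: "i < length v \<Longrightarrow> tup_act z v ! i = z i (v ! i)"
  by (simp add: tup_act_def)

lemma tup_act_len[simp]: "length (tup_act z v) = length v"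
  by (simp add: tup_act_def)

lemma tup_act_inj:
  assumes "\<And>i. inj (z i)" shows "inj (tup_act z)"
proof (rule injI)
  fix v u assume e: "tup_act z v = tup_act z u"
  hence l: "length v = length u" by (metis tup_act_len)
  show "v = u"
  proof (rule nth_equalityI)
    show "length v = length u" by fact
    fix i assume "i < length v"
    hence "z i (v ! i) = z i (u ! i)" using e l by (metis tup_act_nth)
    thus "v ! i = u ! i" using assms by (meson injD)
  qed
qed

theorem theorem1:
  fixes d :: nat and L :: "nat \<Rightarrow> 'a set" and p :: "nat set"
    and M M' :: "'a mlnet"
  assumes disj: "\<And>a b. a \<le> d \<Longrightarrow> b \<le> d \<Longrightarrow> a \<noteq> b \<Longrightarrow> L a \<inter> L b = {}"
    and p_sub: "p \<subseteq> {0..d}" and p_ne: "p \<noteq> {}"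
    and M: "is_mlnet d L M" and M': "is_mlnet d L M'"
  shows "Iso_p d L p M M' =
           {\<zeta> \<in> Pp d L p. gp d L p \<zeta> \<in> cg_iso (fp d L p M) (fp d L p M')}"
proof -
  have THE_eq: "(THE b. b \<in> p \<and> y \<in> L b) = a" if "a \<in> p" "y \<in> L a" for a y
  proof (rule the_equality)
    show "a \<in> p \<and> y \<in> L a" using that by simp
    fix b assume "b \<in> p \<and> y \<in> L b"
    thus "b = a" using that disj[of a b] p_sub
      by (metis IntI atLeastAtMost_iff empty_iff subsetD)
  qed
  have main: "net_act \<zeta> M = M' \<longleftrightarrow> gp d L p \<zeta> \<in> cg_iso (fp d L p M) (fp d L p M')"
    if Z: "\<zeta> \<in> Pp d L p" for \<zeta>
  proof -
    define g where "g = gp d L p \<zeta>"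
    have perm: "\<zeta> a permutes L a" if "a \<in> p" for a
      using Z that p_sub unfolding Pp_def by auto
    have idn: "\<zeta> a = id" if "a \<notin> p" for a
      using Z that unfolding Pp_def by (cases "a \<le> d") auto
    have injz: "inj (\<zeta> i)" for i
      using perm idn permutes_inj by (cases "i \<in> p") auto
    have injt: "inj (tup_act \<zeta>)" using tup_act_inj injz by blast
    have gl: "g (Inl v) = Inl (tup_act \<zeta> v)" for v by (simp add: g_def gp_def)
    have gr: "g (Inr y) = Inr (\<zeta> a y)" if "a \<in> p" "y \<in> L a" for a y
      using THE_eq[OF that] by (simp add: g_def gp_def)
    have zL: "\<zeta> a ` L a = L a" if "a \<in> p" for a using perm[OF that] permutes_image by blast
    have zin: "\<zeta> a y \<in> L a" if "a \<in> p" "y \<in> L a" for a y using zL[OF that(1)] that(2) by blast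
    have ginj: "inj_on g (fp_V d L p N)" for N :: "'a mlnet"
    proof (rule inj_onI)
      fix x y assume x: "x \<in> fp_V d L p N" and y: "y \<in> fp_V d L p N" and e: "g x = g y"
      show "x = y"
      proof (cases x)
        case (Inl v)
        then obtain u where "y = Inl u" using x y e
          by (auto simp: fp_V_def gl gr)
        thus ?thesis using e Inl gl injt by (auto dest: injD)
      next
        case (Inr s)
        then obtain a where a: "a \<in> p" "s \<in> L a" using x by (auto simp: fp_V_def)
        then obtain t b where y': "y = Inr t" "b \<in> p" "t \<in> L b" using y e Inr
          by (auto simp: fp_V_def gl gr)
        have "\<zeta> a s = \<zeta> b t" using e Inr y' a gr by auto
        moreover have "\<zeta> a s \<in> L a" "\<zeta> b t \<in> L b" using a y' zin by auto
        ultimately have "a = b" using disj[of a b] p_sub a y' by (metis IntI atLeastAtMost_iff empty_iff subsetD)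
        thus ?thesis using injz[of a] Inr y' `\<zeta> a s = \<zeta> b t` by (auto dest: injD)
      qed
    qed
    have gimg: "g ` fp_V d L p N = Inl ` tup_act \<zeta> ` fst N \<union> Inr ` (\<Union>a\<in>p. L a)" for N :: "'a mlnet"
    proof -
      have "g ` Inr ` (\<Union>a\<in>p. L a) = Inr ` (\<Union>a\<in>p. L a)"
      proof
        show "g ` Inr ` (\<Union>a\<in>p. L a) \<subseteq> Inr ` (\<Union>a\<in>p. L a)" using gr zin by fastforce
        show "Inr ` (\<Union>a\<in>p. L a) \<subseteq> g ` Inr ` (\<Union>a\<in>p. L a)"
        proof
          fix x :: "'a list + 'a" assume "x \<in> Inr ` (\<Union>a\<in>p. L a)"
          then obtain a y where a: "a \<in> p" "y \<in> L a" "x = Inr y" by auto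
          then obtain y0 where "y0 \<in> L a" "y = \<zeta> a y0" using zL by blast
          thus "x \<in> g ` Inr ` (\<Union>a\<in>p. L a)" using a gr by (metis UN_I image_eqI)
        qed
      qed
      moreover have "g ` Inl ` fst N = Inl ` tup_act \<zeta> ` fst N" using gl by (auto simp: image_image)
      ultimately show ?thesis by (simp add: fp_V_def image_Un)
    qed
    let ?E1 = "\<lambda>N :: 'a mlnet. {(Inl v, Inl u) | v u. (v, u) \<in> snd N} :: (('a list + 'a) \<times> ('a list + 'a)) set"
    let ?E2 = "\<lambda>N :: 'a mlnet. {(Inr (v ! a), Inl v) | v a. v \<in> fst N \<and> a \<in> p} :: (('a list + 'a) \<times> ('a list + 'a)) set"
    let ?h = "\<lambda>(v, u). (g v, g u)"
    have e1: "?h ` ?E1 N = ?E1 (net_act \<zeta> N)" for N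
    proof
      show "?h ` ?E1 N \<subseteq> ?E1 (net_act \<zeta> N)" by (auto simp: net_act_def gl)
      show "?E1 (net_act \<zeta> N) \<subseteq> ?h ` ?E1 N"
      proof
        fix x assume "x \<in> ?E1 (net_act \<zeta> N)"
        then obtain v u where vu: "(v, u) \<in> snd N" "x = (Inl (tup_act \<zeta> v), Inl (tup_act \<zeta> u))"
          by (auto simp: net_act_def)
        hence "x = ?h (Inl v, Inl u)" by (simp add: gl)
        thus "x \<in> ?h ` ?E1 N" using vu by blast
      qed
    qed
    have e2: "?h ` ?E2 N = ?E2 (net_act \<zeta> N)" if "is_mlnet d L N" for N
    proof -
      have mem: "v ! a \<in> L a" "a < length v" if "v \<in> fst N" "a \<in> p" for v a
      proof -
        have "a \<le> d" using that p_sub by auto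
        moreover have "length v = Suc d \<and> (\<forall>a\<le>d. v ! a \<in> L a)"
          using \<open>is_mlnet d L N\<close> that unfolding is_mlnet_def tuples_def by blast
        ultimately show "v ! a \<in> L a" "a < length v" by auto
      qed
      show ?thesis
      proof
        show "?h ` ?E2 N \<subseteq> ?E2 (net_act \<zeta> N)"
        proof
          fix x assume "x \<in> ?h ` ?E2 N"
          then obtain v a where va: "v \<in> fst N" "a \<in> p" "x = ?h (Inr (v ! a), Inl v)" by blast
          hence "x = (Inr (tup_act \<zeta> v ! a), Inl (tup_act \<zeta> v))"
            using gr[OF va(2) mem(1)[OF va(1,2)]] gl tup_act_nth[OF mem(2)[OF va(1,2)]] by simp
          thus "x \<in> ?E2 (net_act \<zeta> N)" using va by (auto simp: net_act_def)
        qed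
        show "?E2 (net_act \<zeta> N) \<subseteq> ?h ` ?E2 N"
        proof
          fix x assume "x \<in> ?E2 (net_act \<zeta> N)"
          then obtain v a where va: "v \<in> fst N" "a \<in> p" "x = (Inr (tup_act \<zeta> v ! a), Inl (tup_act \<zeta> v))"
            by (auto simp: net_act_def)
          hence "x = ?h (Inr (v ! a), Inl v)"
            using gr[OF va(2) mem(1)[OF va(1,2)]] gl tup_act_nth[OF mem(2)[OF va(1,2)]] by simp
          thus "x \<in> ?h ` ?E2 N" using va by blast
        qed
      qed
    qed
    show ?thesis
    proof
      assume A: "net_act \<zeta> M = M'"
      have V': "fp_V d L p M' = g ` fp_V d L p M"
        using gimg A by (auto simp: fp_V_def net_act_def)
      have bij: "bij_betw g (fp_V d L p M) (fp_V d L p M')"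
        using ginj V' by (simp add: bij_betw_def)
      have E: "?h ` (?E1 M \<union> ?E2 M) = ?E1 M' \<union> ?E2 M'"
        using e1 e2[OF M] A by (simp add: image_Un)
      let ?V = "fp_V d L p M"
      let ?pi = "\<lambda>N. restrict (\<lambda>x. case x of
                  Inl v \<Rightarrow> Inr (map (\<lambda>a. v ! a) (pbar d p))
                | Inr y \<Rightarrow> Inl (THE a. a \<in> p \<and> y \<in> L a)) (fp_V d L p N) :: _ \<Rightarrow> nat + 'a list"
      have PI: "restrict (?pi M \<circ> inv_into ?V g) (g ` ?V) = ?pi M'"
      proof (rule ext)
        fix x
        show "restrict (?pi M \<circ> inv_into ?V g) (g ` ?V) x = ?pi M' x"
        proof (cases "x \<in> g ` ?V")
          case False thus ?thesis using V' by simp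
        next
          case True
          then obtain x0 where x0: "x0 \<in> ?V" "x = g x0" by blast
          have inv: "inv_into ?V g x = x0" using x0 inv_into_f_f[OF ginj] by simp
          show ?thesis
          proof (cases x0)
            case (Inl v)
            have vM: "v \<in> fst M" using x0 Inl by (auto simp: fp_V_def)
            have len: "length v = Suc d" using M vM unfolding is_mlnet_def tuples_def by auto
            have "map (\<lambda>a. tup_act \<zeta> v ! a) (pbar d p) = map (\<lambda>a. v ! a) (pbar d p)"
            proof (rule map_cong[OF refl])
              fix a assume "a \<in> set (pbar d p)"
              hence "a < length v" "a \<notin> p" using len by (auto simp: pbar_def simp del: upt_Suc)
              thus "tup_act \<zeta> v ! a = v ! a" using tup_act_nth[of a v \<zeta>] idn[of a] by simp
            qed
            thus ?thesis using True V' x0 Inl inv gl by simp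
          next
            case (Inr y)
            then obtain a where a: "a \<in> p" "y \<in> L a" using x0 by (auto simp: fp_V_def)
            have "x = Inr (\<zeta> a y)" using x0 Inr gr[OF a] by simp
            thus ?thesis using True V' x0 Inr inv THE_eq[OF a] THE_eq[OF a(1) zin[OF a]] by simp
          qed
        qed
      qed
      have "cg_act g (fp d L p M) = fp d L p M'"
        unfolding cg_act_def fp_def using V' E PI by simp
      thus "gp d L p \<zeta> \<in> cg_iso (fp d L p M) (fp d L p M')"
        using bij unfolding cg_iso_def g_def fp_def by simp
    next
      assume "gp d L p \<zeta> \<in> cg_iso (fp d L p M) (fp d L p M')"
      hence C: "cg_act g (fp d L p M) = fp d L p M'" by (simp add: cg_iso_def g_def)
      have V: "g ` fp_V d L p M = fp_V d L p M'"
        using C unfolding cg_act_def fp_def by simp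
      have E: "?h ` (?E1 M \<union> ?E2 M) = ?E1 M' \<union> ?E2 M'"
        using C unfolding cg_act_def fp_def by simp
      have f: "fst (net_act \<zeta> M) = fst M'"
      proof -
        have "Inl ` fst (net_act \<zeta> M) \<union> Inr ` (\<Union>a\<in>p. L a) = Inl ` fst M' \<union> Inr ` (\<Union>a\<in>p. L a)"
          using V gimg[of M] by (simp add: fp_V_def net_act_def)
        hence "Inl -` (Inl ` fst (net_act \<zeta> M) \<union> Inr ` (\<Union>a\<in>p. L a)) = Inl -` (Inl ` fst M' \<union> Inr ` (\<Union>a\<in>p. L a))"
          by simp
        moreover have "Inl -` Inr ` X = ({} :: 'a list set)" for X :: "'a set" by auto
        ultimately show ?thesis by (simp add: vimage_Un inj_vimage_image_eq)
      qed
      have s: "snd (net_act \<zeta> M) = snd M'"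
      proof -
        have "?E1 (net_act \<zeta> M) \<union> ?E2 (net_act \<zeta> M) = ?E1 M' \<union> ?E2 M'"
          using E e1 e2[OF M] by (simp add: image_Un)
        hence "{(v, u). (Inl v, Inl u) \<in> ?E1 (net_act \<zeta> M) \<union> ?E2 (net_act \<zeta> M)}
             = {(v, u). (Inl v, Inl u) \<in> ?E1 M' \<union> ?E2 M'}" by simp
        thus ?thesis by auto
      qed
      show "net_act \<zeta> M = M'" using f s by (simp add: prod_eq_iff)
    qed
  qed
  show ?thesis unfolding Iso_p_def using main by blast
qed

end
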